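(* Let $R$ be a commutative ring with $1\neq 0$, $S\subseteq R$ a multiplicatively closed subset, and $M$ a finitely generated faithful multiplication $R$-module. Then $\mathrm{rad}^{S}(M)=\mathrm{rad}^{S}(R)\,M$, where $\mathrm{rad}^{S}(M)$ denotes the intersection of all $S$-prime submodules of $M$ and $\mathrm{rad}^{S}(R)$ the intersection of all $S$-prime ideals of $R$.
   Context: All rings are commutative with $1\neq 0$ and all modules are unital. A multiplicatively closed subset (m.c.s.) $S$ of $R$ is a subset with $0\notin S$, $1\in S$, and $ss'\in S$ for all $s,s'\in S$. $M$ is a multiplication module if every submodule of $M$ equals $JM$ for some ideal $J$; faithful means $\mathrm{Ann}_R(M)=0$. $(L:_R M)=\{r\in R: rM\subseteq L\}$. A submodule $P$ of $M$ with $(P:_R M)\cap S=\emptyset$ is $S$-prime if there exists $s\in S$ such that whenever $am\in P$ ($a\in R$, $m\in M$), then $sa\in(P:_R M)$ or $sm\in P$; $S$-prime ideals are $S$-prime submodules of the $R$-module $R$. An empty intersection of submodules of $M$ is taken to be $M$. *)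

theory Defs
  imports Main "HOL.Modules"
begin

text \<open>Rings are types of class comm_ring_1 (so 1 is not 0); an R-module M is the
  whole carrier of a type 'b of class ab_group_add together with a scalar
  multiplication scale satisfying the locale module.\<close>

definition mcs :: "'a::comm_ring_1 set \<Rightarrow> bool" where
  "mcs S \<longleftrightarrow> 0 \<notin> S \<and> 1 \<in> S \<and> (\<forall>s\<in>S. \<forall>t\<in>S. s * t \<in> S)"

definition colon :: "('a::comm_ring_1 \<Rightarrow> 'b::ab_group_add \<Rightarrow> 'b) \<Rightarrow> 'b set \<Rightarrow> 'a set" where
  "colon scale L = {r. \<forall>m. scale r m \<in> L}"

definition ideal_smult :: "('a::comm_ring_1 \<Rightarrow> 'b::ab_group_add \<Rightarrow> 'b) \<Rightarrow> 'a set \<Rightarrow> 'b set" where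
  "ideal_smult scale J = module.span scale {scale r m | r m. r \<in> J}"

definition is_ideal :: "'a::comm_ring_1 set \<Rightarrow> bool" where
  "is_ideal J \<longleftrightarrow> module.subspace ((*) :: 'a \<Rightarrow> 'a \<Rightarrow> 'a) J"

definition multiplication_module :: "('a::comm_ring_1 \<Rightarrow> 'b::ab_group_add \<Rightarrow> 'b) \<Rightarrow> bool" where
  "multiplication_module scale \<longleftrightarrow>
     (\<forall>N. module.subspace scale N \<longrightarrow> (\<exists>J. is_ideal J \<and> N = ideal_smult scale J))"

definition faithful :: "('a::comm_ring_1 \<Rightarrow> 'b::ab_group_add \<Rightarrow> 'b) \<Rightarrow> bool" where
  "faithful scale \<longleftrightarrow> colon scale {0} = {0}"

definition finitely_generated :: "('a::comm_ring_1 \<Rightarrow> 'b::ab_group_add \<Rightarrow> 'b) \<Rightarrow> bool" where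
  "finitely_generated scale \<longleftrightarrow> (\<exists>F. finite F \<and> module.span scale F = UNIV)"

definition S_prime :: "('a::comm_ring_1 \<Rightarrow> 'b::ab_group_add \<Rightarrow> 'b) \<Rightarrow> 'a set \<Rightarrow> 'b set \<Rightarrow> bool" where
  "S_prime scale S P \<longleftrightarrow> module.subspace scale P \<and> colon scale P \<inter> S = {} \<and>
     (\<exists>s\<in>S. \<forall>a m. scale a m \<in> P \<longrightarrow> s * a \<in> colon scale P \<or> scale s m \<in> P)"

definition radS :: "('a::comm_ring_1 \<Rightarrow> 'b::ab_group_add \<Rightarrow> 'b) \<Rightarrow> 'a set \<Rightarrow> 'b set" where
  "radS scale S = \<Inter> {P. S_prime scale S P}"

end

theory Submission
  imports Defs
begin

lemma mR: "module ((*) :: 'a::comm_ring_1 \<Rightarrow> 'a \<Rightarrow> 'a)"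
  by unfold_locales (auto simp: algebra_simps)

lemma ideal_0: "is_ideal I \<Longrightarrow> 0 \<in> I"
  unfolding is_ideal_def by (rule module.subspace_0[OF mR])
lemma ideal_add: "is_ideal I \<Longrightarrow> x \<in> I \<Longrightarrow> y \<in> I \<Longrightarrow> x + y \<in> I"
  unfolding is_ideal_def by (rule module.subspace_add[OF mR])
lemma ideal_diff: "is_ideal I \<Longrightarrow> x \<in> I \<Longrightarrow> y \<in> I \<Longrightarrow> x - y \<in> I"
  unfolding is_ideal_def by (rule module.subspace_diff[OF mR])
lemma ideal_multL: "is_ideal I \<Longrightarrow> x \<in> I \<Longrightarrow> c * x \<in> I"
  unfolding is_ideal_def by (rule module.subspace_scale[OF mR])
lemma ideal_sum: "is_ideal I \<Longrightarrow> (\<And>x. x \<in> B \<Longrightarrow> f x \<in> I) \<Longrightarrow> sum f B \<in> I"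
  unfolding is_ideal_def by (rule module.subspace_sum[OF mR])
lemma ideal_multR: "is_ideal I \<Longrightarrow> x \<in> I \<Longrightarrow> x * c \<in> I"
  using ideal_multL[of I x c] by (simp add: mult.commute)

lemma colon_ring: "is_ideal Q \<Longrightarrow> colon (*) Q = Q"
  unfolding colon_def using ideal_multR[of Q] by (auto dest: spec[of _ 1])

lemma S_prime_ring:
  "S_prime (*) S Q \<longleftrightarrow> is_ideal Q \<and> Q \<inter> S = {} \<and>
     (\<exists>s\<in>S. \<forall>a m. a * m \<in> Q \<longrightarrow> s * a \<in> Q \<or> s * m \<in> Q)"
proof -
  have "S_prime (*) S Q \<longleftrightarrow> is_ideal Q \<and> colon (*) Q \<inter> S = {} \<and>
     (\<exists>s\<in>S. \<forall>a m. a * m \<in> Q \<longrightarrow> s * a \<in> colon (*) Q \<or> s * m \<in> Q)"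
    unfolding S_prime_def is_ideal_def by simp
  then show ?thesis using colon_ring by metis
qed

context module
begin

lemma nak_ind:
  assumes I: "is_ideal I" and fin: "finite F"
  shows "subspace N \<Longrightarrow> (\<forall>g\<in>F. g \<in> span ({scale r h | r h. r \<in> I \<and> h \<in> F} \<union> N))
     \<Longrightarrow> \<exists>a\<in>I. \<forall>g\<in>F. scale (1-a) g \<in> N"
  using fin
proof (induction F arbitrary: N)
  case empty
  then show ?case using ideal_0[OF I] by auto
next
  case (insert f F N)
  define G where "G = (\<lambda>X. {scale r h | r h. r \<in> I \<and> h \<in> X})"
  define N' where "N' = span (insert f N)"
  have N': "subspace N'" unfolding N'_def by simp
  have spN: "span N = N" using insert.prems(1) by simp
  have "span (G (insert f F) \<union> N) \<subseteq> span (G F \<union> N')"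
  proof (rule span_minimal)
    show "G (insert f F) \<union> N \<subseteq> span (G F \<union> N')"
    proof
      fix z assume z: "z \<in> G (insert f F) \<union> N"
      show "z \<in> span (G F \<union> N')"
      proof (cases "z \<in> N")
        case True
        then have "z \<in> N'" unfolding N'_def by (simp add: span_base)
        then show ?thesis by (simp add: span_base)
      next
        case False
        then obtain r h where rh: "z = scale r h" "r \<in> I" "h \<in> insert f F"
          using z unfolding G_def by auto
        show ?thesis
        proof (cases "h = f")
          case True
          then have "z \<in> N'" unfolding N'_def rh by (simp add: span_base span_scale)
          then show ?thesis by (simp add: span_base)
        next
          case False
          then have "z \<in> G F" using rh unfolding G_def by auto
          then show ?thesis by (simp add: span_base)
        qed
      qed
    qed
  qed simp
  then have "\<forall>g\<in>F. g \<in> span (G F \<union> N')"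
    using insert.prems(2) unfolding G_def by auto
  from insert.IH[OF N' this[unfolded G_def]] obtain b where b: "b \<in> I"
    and bF: "\<forall>g\<in>F. scale (1-b) g \<in> N'" by auto
  have bF': "\<exists>k. scale (1-b) g - scale k f \<in> N" if "g \<in> F" for g
    using bF that unfolding N'_def span_insert spN by auto
  have D: "\<exists>a\<in>I. z - scale a f \<in> span (G F \<union> N)"
    if "z \<in> span (G (insert f F) \<union> N)" for z
    using that
  proof (induction rule: span_induct)
    case base
    show ?case
    proof (rule subspaceI)
      show "0 \<in> Collect (\<lambda>z. \<exists>a\<in>I. z - a *s f \<in> span (G F \<union> N))"
        using ideal_0[OF I] by (auto intro!: bexI[of _ 0] simp: span_zero)
    next
      fix x y assume "x \<in> Collect (\<lambda>z. \<exists>a\<in>I. z - a *s f \<in> span (G F \<union> N))"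
        "y \<in> Collect (\<lambda>z. \<exists>a\<in>I. z - a *s f \<in> span (G F \<union> N))"
      then obtain a1 a2 where "a1 \<in> I" "a2 \<in> I" "x - a1 *s f \<in> span (G F \<union> N)"
        "y - a2 *s f \<in> span (G F \<union> N)" by auto
      moreover have eq: "(x + y) - (a1+a2) *s f = (x - a1 *s f) + (y - a2 *s f)"
        by (simp add: scale_left_distrib algebra_simps)
      ultimately show "x + y \<in> Collect (\<lambda>z. \<exists>a\<in>I. z - a *s f \<in> span (G F \<union> N))"
        using ideal_add[OF I]
        by (intro CollectI bexI[of _ "a1+a2"]) (simp_all only: eq span_add)
    next
      fix c x assume "x \<in> Collect (\<lambda>z. \<exists>a\<in>I. z - a *s f \<in> span (G F \<union> N))"
      then obtain a where "a \<in> I" "x - a *s f \<in> span (G F \<union> N)" by auto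
      then have "c *s (x - a *s f) \<in> span (G F \<union> N)" using span_scale by blast
      then show "c *s x \<in> Collect (\<lambda>z. \<exists>a\<in>I. z - a *s f \<in> span (G F \<union> N))"
        using ideal_multL[OF I \<open>a \<in> I\<close>, of c]
        by (auto intro!: bexI[of _ "c*a"] simp: scale_right_diff_distrib)
    qed
  next
    case (step z)
    show ?case
    proof (cases "z \<in> N")
      case True
      then show ?thesis using ideal_0[OF I] by (auto intro!: bexI[of _ 0] simp: span_base)
    next
      case False
      then obtain r h where rh: "z = scale r h" "r \<in> I" "h \<in> insert f F"
        using step unfolding G_def by auto
      show ?thesis
      proof (cases "h = f")
        case True
        then show ?thesis using rh by (auto intro!: bexI[of _ r] simp: span_zero)
      next
        case False
        then have "z \<in> G F" using rh unfolding G_def by auto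
        then show ?thesis using ideal_0[OF I] by (auto intro!: bexI[of _ 0] simp: span_base)
      qed
    qed
  qed
  have "f \<in> span (G (insert f F) \<union> N)" using insert.prems(2) unfolding G_def by auto
  from D[OF this] obtain a where a: "a \<in> I" "scale (1 - a) f \<in> span (G F \<union> N)"
    by (auto simp: scale_left_diff_distrib)
  have E: "\<exists>c\<in>I. scale (1-b) z - scale c f \<in> N" if "z \<in> span (G F \<union> N)" for z
    using that
  proof (induction rule: span_induct)
    case base
    show ?case
    proof (rule subspaceI)
      show "0 \<in> Collect (\<lambda>z. \<exists>c\<in>I. scale (1-b) z - c *s f \<in> N)"
        using ideal_0[OF I] subspace_0[OF insert.prems(1)] by (auto intro!: bexI[of _ 0])
    next
      fix x y assume "x \<in> Collect (\<lambda>z. \<exists>c\<in>I. scale (1-b) z - c *s f \<in> N)"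
        "y \<in> Collect (\<lambda>z. \<exists>c\<in>I. scale (1-b) z - c *s f \<in> N)"
      then obtain a1 a2 where "a1 \<in> I" "a2 \<in> I" "scale (1-b) x - a1 *s f \<in> N"
        "scale (1-b) y - a2 *s f \<in> N" by auto
      moreover have "scale (1-b) (x + y) - (a1+a2) *s f =
          (scale (1-b) x - a1 *s f) + (scale (1-b) y - a2 *s f)"
        by (simp add: scale_left_distrib scale_right_distrib algebra_simps)
      ultimately show "x + y \<in> Collect (\<lambda>z. \<exists>c\<in>I. scale (1-b) z - c *s f \<in> N)"
        using subspace_add[OF insert.prems(1)] ideal_add[OF I]
        by (auto intro!: bexI[of _ "a1+a2"])
    next
      fix c x assume "x \<in> Collect (\<lambda>z. \<exists>c\<in>I. scale (1-b) z - c *s f \<in> N)"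
      then obtain a where "a \<in> I" "scale (1-b) x - a *s f \<in> N" by auto
      then have "c *s (scale (1-b) x - a *s f) \<in> N" using subspace_scale[OF insert.prems(1)] by blast
      then show "c *s x \<in> Collect (\<lambda>z. \<exists>c\<in>I. scale (1-b) z - c *s f \<in> N)"
        using ideal_multL[OF I \<open>a \<in> I\<close>, of c]
        by (auto intro!: bexI[of _ "c*a"] simp: scale_right_diff_distrib mult.commute)
    qed
  next
    case (step z)
    show ?case
    proof (cases "z \<in> N")
      case True
      then show ?thesis using ideal_0[OF I] subspace_scale[OF insert.prems(1)]
        by (auto intro!: bexI[of _ 0])
    next
      case False
      then obtain r h where rh: "z = scale r h" "r \<in> I" "h \<in> F"
        using step unfolding G_def by auto
      obtain k where k: "scale (1-b) h - scale k f \<in> N" using bF'[OF rh(3)] by auto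
      have "scale r (scale (1-b) h - scale k f) \<in> N"
        using k subspace_scale[OF insert.prems(1)] by blast
      then show ?thesis using rh ideal_multR[OF I rh(2), of k]
        by (auto intro!: bexI[of _ "r*k"] simp: scale_right_diff_distrib mult.commute)
    qed
  qed
  from E[OF a(2)] obtain c where c0: "c \<in> I" "scale (1-b) (scale (1-a) f) - scale c f \<in> N"
    by blast
  have "scale (1-b) (scale (1-a) f) - scale c f = scale ((1-b)*(1-a) - c) f"
    by (subst scale_scale) (rule scale_left_diff_distrib[symmetric])
  with c0 have c: "c \<in> I" "scale ((1-b)*(1-a) - c) f \<in> N" by auto
  define d where "d = (1-b)*(1-a) - c"
  define e where "e = 1 - d*(1-b)"

  have e1: "1 - d = a + b - a*b + c" unfolding d_def by (simp add: algebra_simps)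
  have "1 - d \<in> I" unfolding e1
    using a(1) b c(1) by (intro ideal_add ideal_diff I ideal_multL) auto
  moreover have "e = (1 - d) + d * b" unfolding e_def by (simp add: algebra_simps)
  ultimately have eI: "e \<in> I" using ideal_add[OF I] ideal_multL[OF I b] by auto
  have fN: "scale d f \<in> N" using c(2) unfolding d_def .
  show ?case
  proof (intro bexI[OF _ eI] ballI)
    fix g assume "g \<in> insert f F"
    then show "scale (1 - e) g \<in> N"
    proof
      assume "g = f"
      then show ?thesis using subspace_scale[OF insert.prems(1) fN, of "1-b"]
        by (simp add: e_def mult.commute)
    next
      assume g: "g \<in> F"
      obtain k where k: "scale (1-b) g - scale k f \<in> N" using bF'[OF g] by auto
      have "scale d (scale (1-b) g - scale k f) + scale k (scale d f) \<in> N"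
        using subspace_add[OF insert.prems(1)] subspace_scale[OF insert.prems(1)] k fN by blast
      then show ?thesis by (simp add: e_def scale_right_diff_distrib mult.commute)
    qed
  qed
qed

lemma IM_sub: "subspace (ideal_smult scale J)" unfolding ideal_smult_def by simp
lemma IM_base: "r \<in> J \<Longrightarrow> scale r m \<in> ideal_smult scale J"
  unfolding ideal_smult_def by (rule span_base) auto
lemma IM_mono: "J \<subseteq> J' \<Longrightarrow> ideal_smult scale J \<subseteq> ideal_smult scale J'"
  unfolding ideal_smult_def by (rule span_mono) auto
lemma IM_min: "subspace N \<Longrightarrow> (\<And>r m. r \<in> J \<Longrightarrow> scale r m \<in> N) \<Longrightarrow> ideal_smult scale J \<subseteq> N"
  unfolding ideal_smult_def by (rule span_minimal) auto

lemma colon_ideal: assumes N: "subspace N" shows "is_ideal (colon scale N)"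
  unfolding is_ideal_def colon_def
proof (rule module.subspaceI[OF mR])
  show "0 \<in> {r. \<forall>m. r *s m \<in> N}" using subspace_0[OF N] by simp
next
  fix x y assume "x \<in> {r. \<forall>m. r *s m \<in> N}" "y \<in> {r. \<forall>m. r *s m \<in> N}"
  then show "x + y \<in> {r. \<forall>m. r *s m \<in> N}"
    using subspace_add[OF N] by (auto simp: scale_left_distrib)
next
  fix c x assume "x \<in> {r. \<forall>m. r *s m \<in> N}"
  then show "c * x \<in> {r. \<forall>m. r *s m \<in> N}"
    using subspace_scale[OF N] by (auto simp flip: scale_scale)
qed

lemma mult_eq:
  assumes mm: "multiplication_module scale" and N: "subspace N"
  shows "N = ideal_smult scale (colon scale N)"
proof -
  obtain J where J: "is_ideal J" "N = ideal_smult scale J"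
    using mm N unfolding multiplication_module_def by blast
  have "J \<subseteq> colon scale N" unfolding colon_def J(2) using IM_base by auto
  then have "N \<subseteq> ideal_smult scale (colon scale N)" using J(2) IM_mono by auto
  moreover have "ideal_smult scale (colon scale N) \<subseteq> N"
    by (rule IM_min[OF N]) (auto simp: colon_def)
  ultimately show ?thesis by blast
qed

lemma nak:
  assumes fg: "finitely_generated scale" and fa: "faithful scale" and I: "is_ideal I"
    and all: "\<And>x. x \<in> ideal_smult scale I"
  shows "1 \<in> I"
proof -
  obtain F where F: "finite F" "span F = UNIV" using fg unfolding finitely_generated_def by blast
  define GF where "GF = {scale r h | r h. r \<in> I \<and> h \<in> F}"
  have "ideal_smult scale I \<subseteq> span GF"
  proof (rule IM_min)
    fix r m assume r: "r \<in> I"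
    have "m \<in> span F" using F by simp
    then show "scale r m \<in> span GF"
    proof (induction rule: span_induct)
      case base
      show ?case
      proof (rule subspaceI)
        fix c x assume "x \<in> {m. r *s m \<in> span GF}"
        then have "c *s (r *s x) \<in> span GF" using span_scale by blast
        then show "c *s x \<in> {m. r *s m \<in> span GF}" by (simp add: mult.commute)
      qed (auto simp: span_zero scale_right_distrib span_add)
    next
      case (step x)
      then show ?case using r unfolding GF_def by (auto intro: span_base)
    qed
  qed simp
  then have "\<forall>g\<in>F. g \<in> span (GF \<union> {0})" using all span_mono[of GF "GF \<union> {0}"] by blast
  from nak_ind[OF I F(1) subspace_single_0 this[unfolded GF_def]]
  obtain a where a: "a \<in> I" "\<forall>g\<in>F. scale (1-a) g = 0" by auto
  have "scale (1-a) x = 0" for x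
  proof -
    have "x \<in> span F" using F by simp
    then show ?thesis
    proof (induction rule: span_induct)
      case base
      show ?case
      proof (rule subspaceI)
        fix c x assume "x \<in> {x. (1 - a) *s x = 0}"
        then show "c *s x \<in> {x. (1 - a) *s x = 0}" using scale_left_commute[of "1-a" c x] by simp
      qed (auto simp: scale_right_distrib)
    next
      case (step x)
      then show ?case using a by auto
    qed
  qed
  then have "1 - a \<in> colon scale {0}" unfolding colon_def by auto
  then have "1 - a = 0" using fa unfolding faithful_def by auto
  then show ?thesis using a by simp
qed

lemma key:
  assumes fa: "faithful scale" and J: "is_ideal J"
    and a: "\<And>x. scale a x \<in> span {m}" and r: "\<And>x. scale r x \<in> ideal_smult scale J"
  shows "a * a * r \<in> J"
proof -
  have st: "\<exists>j\<in>J. scale a z = scale j m" if "z \<in> ideal_smult scale J" for z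
    using that unfolding ideal_smult_def
  proof (induction rule: span_induct)
    case base
    show ?case
    proof (rule subspaceI)
      show "0 \<in> Collect (\<lambda>z. \<exists>j\<in>J. a *s z = j *s m)"
        using ideal_0[OF J] by (auto intro!: bexI[of _ 0])
    next
      fix x y assume "x \<in> Collect (\<lambda>z. \<exists>j\<in>J. a *s z = j *s m)" "y \<in> Collect (\<lambda>z. \<exists>j\<in>J. a *s z = j *s m)"
      then obtain j1 j2 where "j1 \<in> J" "j2 \<in> J" "a *s x = j1 *s m" "a *s y = j2 *s m" by auto
      then show "x + y \<in> Collect (\<lambda>z. \<exists>j\<in>J. a *s z = j *s m)"
        using ideal_add[OF J] by (auto intro!: bexI[of _ "j1+j2"] simp: scale_right_distrib scale_left_distrib)
    next
      fix c x assume "x \<in> Collect (\<lambda>z. \<exists>j\<in>J. a *s z = j *s m)"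
      then obtain j where "j \<in> J" "a *s x = j *s m" by auto
      then have "a *s (c *s x) = (c*j) *s m" by (metis scale_left_commute scale_scale)
      then show "c *s x \<in> Collect (\<lambda>z. \<exists>j\<in>J. a *s z = j *s m)"
        using ideal_multL[OF J \<open>j \<in> J\<close>] by auto
    qed
  next
    case (step z)
    then obtain j y where jy: "j \<in> J" "z = scale j y" by auto
    obtain k where k: "scale a y = scale k m" using a[of y] unfolding span_singleton by auto
    have "a *s z = (j*k) *s m" using jy k by (metis scale_left_commute scale_scale)
    then show ?case using ideal_multR[OF J jy(1), of k] by auto
  qed
  obtain j where j: "j \<in> J" "scale a (scale r m) = scale j m" using st[OF r] by blast
  have "scale ((a*r - j)*a) x = 0" for x
  proof -
    obtain k where k: "scale a x = scale k m" using a[of x] unfolding span_singleton by auto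
    have "scale ((a*r - j)*a) x = scale (a*r - j) (scale a x)" by simp
    also have "\<dots> = scale k (scale (a*r - j) m)" by (simp add: k mult.commute)
    also have "scale (a*r - j) m = 0" using j(2) by (simp add: scale_left_diff_distrib)
    finally show ?thesis by simp
  qed
  then have "(a*r - j)*a \<in> colon scale {0}" unfolding colon_def by auto
  then have "(a*r - j)*a = 0" using fa unfolding faithful_def by auto
  then have "a*a*r = j*a" by (simp add: algebra_simps)
  then show ?thesis using ideal_multR[OF J j(1)] by simp
qed

lemma radical_ideal:
  assumes K: "is_ideal K"
  shows "is_ideal {x. \<exists>n. x ^ n \<in> K}"
  unfolding is_ideal_def
proof (rule module.subspaceI[OF mR])
  show "0 \<in> {x. \<exists>n. x ^ n \<in> K}" using ideal_0[OF K] by (auto intro!: exI[of _ 1])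
next
  fix c x assume "x \<in> {x. \<exists>n. x ^ n \<in> K}"
  then obtain n where "x ^ n \<in> K" by auto
  then have "(c * x) ^ n \<in> K" using ideal_multL[OF K] by (simp add: power_mult_distrib)
  then show "c * x \<in> {x. \<exists>n. x ^ n \<in> K}" by auto
next
  fix x y assume "x \<in> {x. \<exists>n. x ^ n \<in> K}" "y \<in> {x. \<exists>n. x ^ n \<in> K}"
  then obtain p q where p: "x ^ p \<in> K" and q: "y ^ q \<in> K" by auto
  have "(x + y) ^ (p + q) \<in> K"
    unfolding binomial_ring
  proof (rule ideal_sum[OF K])
    fix k assume "k \<in> {..p+q}"
    show "of_nat (p + q choose k) * x ^ k * y ^ (p + q - k) \<in> K"
    proof (cases "p \<le> k")
      case True
      then have "x ^ k = x ^ p * x ^ (k - p)" by (simp flip: power_add)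
      then show ?thesis using ideal_multR[OF K p, of "x ^ (k - p) * of_nat (p + q choose k) * y ^ (p + q - k)"]
        by (simp add: ac_simps)
    next
      case False
      then have "p + q - k = q + (p - k)" by arith
      then have "y ^ (p + q - k) = y ^ q * y ^ (p - k)" by (simp add: power_add)
      then show ?thesis using ideal_multR[OF K q, of "y ^ (p - k) * of_nat (p + q choose k) * x ^ k"]
        by (simp add: ac_simps)
    qed
  qed
  then show "x + y \<in> {x. \<exists>n. x ^ n \<in> K}" by auto
qed

lemma cancel:
  assumes fg: "finitely_generated scale" and fa: "faithful scale"
    and mm: "multiplication_module scale" and J: "is_ideal J"
    and r: "r \<in> colon scale (ideal_smult scale J)"
  shows "r \<in> J"
proof -
  define A where "A m = colon scale (span {m})" for m
  define T where "T = module.span (*) (\<Union>m. A m)"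
  have TI: "is_ideal T" unfolding is_ideal_def T_def by (rule module.subspace_span[OF mR])
  have "x \<in> ideal_smult scale T" for x
  proof -
    have "x \<in> span {x}" by (simp add: span_base)
    also have "span {x} = ideal_smult scale (A x)" unfolding A_def
      by (rule mult_eq[OF mm subspace_span])
    also have "\<dots> \<subseteq> ideal_smult scale T"
      by (rule IM_mono) (auto simp: T_def intro: module.span_base[OF mR])
    finally show ?thesis .
  qed
  from nak[OF fg fa TI this] have T1: "1 \<in> T" .
  define K where "K = {t. t * r \<in> J}"
  have KI: "is_ideal K" unfolding is_ideal_def K_def
  proof (rule module.subspaceI[OF mR])
    show "0 \<in> {t. t * r \<in> J}" using ideal_0[OF J] by simp
  next
    fix x y assume "x \<in> {t. t * r \<in> J}" "y \<in> {t. t * r \<in> J}"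
    then show "x + y \<in> {t. t * r \<in> J}" using ideal_add[OF J] by (simp add: distrib_right)
  next
    fix c x assume "x \<in> {t. t * r \<in> J}"
    then show "c * x \<in> {t. t * r \<in> J}" using ideal_multL[OF J] by (simp add: mult.assoc)
  qed
  have "T \<subseteq> {x. \<exists>n. x ^ n \<in> K}"
    unfolding T_def
  proof (rule module.span_minimal[OF mR])
    show "(\<Union>m. A m) \<subseteq> {x. \<exists>n. x ^ n \<in> K}"
    proof
      fix a assume "a \<in> (\<Union>m. A m)"
      then obtain m where "a \<in> A m" by auto
      then have "a * a * r \<in> J"
        using key[OF fa J, of a m r] r unfolding A_def colon_def by auto
      then show "a \<in> {x. \<exists>n. x ^ n \<in> K}" unfolding K_def
        by (auto intro!: exI[of _ 2] simp: power2_eq_square)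
    qed
    show "module.subspace (*) {x. \<exists>n. x ^ n \<in> K}"
      using radical_ideal[OF KI] unfolding is_ideal_def .
  qed
  with T1 have "1 \<in> K" by auto
  then show ?thesis unfolding K_def by simp
qed

lemma colon_IM:
  assumes fg: "finitely_generated scale" and fa: "faithful scale"
    and mm: "multiplication_module scale" and Q: "is_ideal Q"
  shows "colon scale (ideal_smult scale Q) = Q"
  using cancel[OF fg fa mm Q] IM_base unfolding colon_def by auto

lemma claim1:
  assumes P: "S_prime scale S P"
  shows "S_prime (*) S (colon scale P)"
proof -
  from P have Ps: "subspace P" and PS: "colon scale P \<inter> S = {}" and
    sp: "\<exists>s\<in>S. \<forall>a m. scale a m \<in> P \<longrightarrow> s * a \<in> colon scale P \<or> scale s m \<in> P"
    unfolding S_prime_def by auto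
  from sp obtain s where s: "s \<in> S" "\<And>a m. scale a m \<in> P \<Longrightarrow> s * a \<in> colon scale P \<or> scale s m \<in> P"
    by blast
  have CI: "is_ideal (colon scale P)" by (rule colon_ideal[OF Ps])
  have "\<forall>a b. a * b \<in> colon scale P \<longrightarrow> s * a \<in> colon scale P \<or> s * b \<in> colon scale P"
  proof (intro allI impI)
    fix a b assume ab: "a * b \<in> colon scale P"
    show "s * a \<in> colon scale P \<or> s * b \<in> colon scale P"
    proof (cases "s * a \<in> colon scale P")
      case False
      have "scale (s * b) y \<in> P" for y
      proof -
        have "scale a (scale b y) \<in> P" using ab unfolding colon_def by simp
        then have "scale s (scale b y) \<in> P" using s(2) False by blast
        then show ?thesis by simp
      qed
      then show ?thesis unfolding colon_def by auto
    qed simp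
  qed
  then show ?thesis unfolding S_prime_ring using CI PS s(1) by blast
qed

lemma claim2:
  assumes fg: "finitely_generated scale" and fa: "faithful scale"
    and mm: "multiplication_module scale" and QP: "S_prime (*) S Q"
  shows "S_prime scale S (ideal_smult scale Q)"
proof -
  from QP obtain s where Q: "is_ideal Q" and QS: "Q \<inter> S = {}" and s: "s \<in> S"
    and pr: "\<And>a b. a * b \<in> Q \<Longrightarrow> s * a \<in> Q \<or> s * b \<in> Q"
    unfolding S_prime_ring by blast
  have CQ: "colon scale (ideal_smult scale Q) = Q" by (rule colon_IM[OF fg fa mm Q])
  have "\<forall>a m. scale a m \<in> ideal_smult scale Q \<longrightarrow> s * a \<in> Q \<or> scale s m \<in> ideal_smult scale Q"
  proof (intro allI impI)
    fix a m assume am: "scale a m \<in> ideal_smult scale Q"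
    show "s * a \<in> Q \<or> scale s m \<in> ideal_smult scale Q"
    proof (cases "s * a \<in> Q")
      case False
      define A where "A = colon scale (span {m})"
      have sc: "s * c \<in> Q" if c: "c \<in> A" for c
      proof -
        have "scale (a * c) y \<in> ideal_smult scale Q" for y
        proof -
          obtain k where k: "scale c y = scale k m"
            using c unfolding A_def colon_def span_singleton by blast
          have "scale (a * c) y = scale k (scale a m)"
            using scale_left_commute[of a k m] by (simp add: k flip: scale_scale)
          then show ?thesis using subspace_scale[OF IM_sub am] by simp
        qed
        then have "a * c \<in> Q" using CQ unfolding colon_def by auto
        then show ?thesis using pr False by blast
      qed
      have "m \<in> span {m}" by (simp add: span_base)
      also have "span {m} = ideal_smult scale A" unfolding A_def
        by (rule mult_eq[OF mm subspace_span])
      finally have "m \<in> ideal_smult scale A" .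
      then have "scale s m \<in> ideal_smult scale Q" unfolding ideal_smult_def[of _ A]
      proof (induction rule: span_induct)
        case base
        show ?case
        proof (rule subspaceI)
          fix c x assume "x \<in> {z. s *s z \<in> ideal_smult scale Q}"
          then have "c *s (s *s x) \<in> ideal_smult scale Q" using subspace_scale[OF IM_sub] by blast
          then show "c *s x \<in> {z. s *s z \<in> ideal_smult scale Q}"
            using scale_left_commute[of s c x] by simp
        qed (auto simp: scale_right_distrib subspace_0[OF IM_sub] subspace_add[OF IM_sub])
      next
        case (step z)
        then obtain c y where "c \<in> A" "z = scale c y" by auto
        then show ?case using IM_base[OF sc] by simp
      qed
      then show ?thesis by simp
    qed simp
  qed
  then show ?thesis unfolding S_prime_def using IM_sub CQ QS s by auto
qed

end


theorem theorem3p6: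
  fixes scale :: "'a::comm_ring_1 \<Rightarrow> 'b::ab_group_add \<Rightarrow> 'b"
    and S :: "'a set"
  assumes "module scale"
    and "mcs S"
    and "finitely_generated scale"
    and "faithful scale"
    and "multiplication_module scale"
  shows "radS scale S = ideal_smult scale (radS ((*) :: 'a \<Rightarrow> 'a \<Rightarrow> 'a) S)"
proof -
  interpret module scale by fact
  note fg = assms(3) and fa = assms(4) and mm = assms(5)
  define PP where "PP = {P. S_prime scale S P}"
  define QQ where "QQ = {Q. S_prime ((*) :: 'a \<Rightarrow> 'a \<Rightarrow> 'a) S Q}"
  have L: "\<Inter>PP \<subseteq> ideal_smult scale (\<Inter>QQ)"
  proof -
    have Ns: "subspace (\<Inter>PP)" unfolding PP_def S_prime_def by (rule subspace_Inter) auto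
    have "colon scale (\<Inter>PP) \<subseteq> \<Inter>QQ"
    proof
      fix r assume r: "r \<in> colon scale (\<Inter>PP)"
      show "r \<in> \<Inter>QQ"
      proof
        fix Q assume Q: "Q \<in> QQ"
        then have "ideal_smult scale Q \<in> PP" unfolding PP_def QQ_def using claim2[OF fg fa mm] by auto
        then have "r \<in> colon scale (ideal_smult scale Q)" using r unfolding colon_def by auto
        moreover have "is_ideal Q" using Q unfolding QQ_def S_prime_ring by auto
        ultimately show "r \<in> Q" using colon_IM[OF fg fa mm] by auto
      qed
    qed
    then have "ideal_smult scale (colon scale (\<Inter>PP)) \<subseteq> ideal_smult scale (\<Inter>QQ)" by (rule IM_mono)
    then show ?thesis using mult_eq[OF mm Ns] by auto
  qed
  have R: "ideal_smult scale (\<Inter>QQ) \<subseteq> \<Inter>PP"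
  proof
    fix x assume x: "x \<in> ideal_smult scale (\<Inter>QQ)"
    show "x \<in> \<Inter>PP"
    proof
      fix P assume P: "P \<in> PP"
      then have Pp: "S_prime scale S P" unfolding PP_def by auto
      then have Ps: "subspace P" unfolding S_prime_def by auto
      have "colon scale P \<in> QQ" using claim1[OF Pp] unfolding QQ_def by auto
      then have "\<Inter>QQ \<subseteq> colon scale P" by auto
      then have "ideal_smult scale (\<Inter>QQ) \<subseteq> ideal_smult scale (colon scale P)" by (rule IM_mono)
      then show "x \<in> P" using x mult_eq[OF mm Ps] by auto
    qed
  qed
  show ?thesis unfolding radS_def using L R unfolding PP_def QQ_def by auto
qed

end
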